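(* If $d$ is unknown, then any non-adaptive deterministic group testing algorithm on $n$ items that detects one defective item must make at least $\Omega(n)$ tests.
   Context: Group testing: items $X=[n]$, unknown defective set $I\subseteq X$ with $d=|I|$. A test $Q\subseteq X$ has answer $1$ if $Q\cap I\neq\emptyset$ and $0$ otherwise. A non-adaptive algorithm fixes all its tests in advance, then computes its output from the answers. "$d$ is unknown" means the algorithm gets no information about $|I|$ and must, for every nonempty defective set $I\subseteq[n]$, output an element of $I$. *)

theory Defs
  imports Complex_Main
begin

definition test_answer :: "nat set \<Rightarrow> nat set \<Rightarrow> bool" where
  "test_answer Q I \<longleftrightarrow> Q \<inter> I \<noteq> {}"

text \<open>A non-adaptive deterministic algorithm = a fixed list of tests plus a decoding
  function from the answer vector to an item.\<close>
definition nonadaptive_finds_defective ::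
    "nat \<Rightarrow> nat set list \<Rightarrow> (bool list \<Rightarrow> nat) \<Rightarrow> bool" where
  "nonadaptive_finds_defective n tests dec \<longleftrightarrow>
     (\<forall>Q\<in>set tests. Q \<subseteq> {1..n}) \<and>
     (\<forall>I. I \<subseteq> {1..n} \<and> I \<noteq> {} \<longrightarrow> dec (map (\<lambda>Q. test_answer Q I) tests) \<in> I)"

end

theory Submission
  imports Defs
begin

lemma key:
  assumes F: "nonadaptive_finds_defective n tests dec"
  shows "\<forall>I. I \<subseteq> {1..n} \<and> I \<noteq> {} \<and> card I = k \<longrightarrow>
     card {j. j < length tests \<and> tests!j \<inter> I \<noteq> {}} + 1 \<ge> k"
proof (induction k rule: less_induct)
  case (less k)
  show ?case
  proof (intro allI impI)
    fix I assume H: "I \<subseteq> {1..n} \<and> I \<noteq> {} \<and> card I = k"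
    define P where "P = (\<lambda>I. {j. j < length tests \<and> tests!j \<inter> I \<noteq> {}})"
    have fin: "finite I" using H finite_subset by blast
    have dI: "\<And>I. I \<subseteq> {1..n} \<Longrightarrow> I \<noteq> {} \<Longrightarrow> dec (map (\<lambda>Q. test_answer Q I) tests) \<in> I"
      using F unfolding nonadaptive_finds_defective_def by blast
    show "card (P I) + 1 \<ge> k"
    proof (cases "k \<le> 1")
      case True then show ?thesis by simp
    next
      case False
      define x where "x = dec (map (\<lambda>Q. test_answer Q I) tests)"
      have xI: "x \<in> I" using dI H x_def by blast
      define J where "J = I - {x}"
      have cJ: "card J = k - 1" unfolding J_def using H xI fin card_Diff_singleton by metis
      have Jne: "J \<noteq> {}" proof
        assume "J = {}" then have "card J = 0" by simp
        then show False using cJ False by linarith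
      qed
      have Jsub: "J \<subseteq> {1..n}" using H J_def by blast
      have IH: "card (P J) + 1 \<ge> k - 1" using less.IH[of "k-1"] False Jsub Jne cJ P_def by auto
      have sub: "P J \<subseteq> P I" unfolding P_def J_def by blast
      have neq: "P J \<noteq> P I"
      proof
        assume eq: "P J = P I"
        have "map (\<lambda>Q. test_answer Q J) tests = map (\<lambda>Q. test_answer Q I) tests"
        proof (rule nth_equalityI)
          fix i assume "i < length (map (\<lambda>Q. test_answer Q J) tests)"
          then have i: "i < length tests" by simp
          have "(i \<in> P J) = (i \<in> P I)" using eq by simp
          then show "map (\<lambda>Q. test_answer Q J) tests ! i = map (\<lambda>Q. test_answer Q I) tests ! i"
            using i unfolding P_def test_answer_def by simp
        qed simp
        then have "x \<in> J" using dI[OF Jsub Jne] unfolding x_def by metis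
        then show False using J_def by simp
      qed
      have "finite (P I)" unfolding P_def by simp
      then have "card (P J) < card (P I)" using sub neq by (meson psubsetI psubset_card_mono)
      then show ?thesis using IH by linarith
    qed
  qed
qed

theorem theorem10:
  shows "\<exists>c::real>0. \<exists>N::nat. \<forall>n\<ge>N. \<forall>tests dec.
           nonadaptive_finds_defective n tests dec \<longrightarrow> real (length tests) \<ge> c * real n"
proof (intro exI[of _ "1/2"] conjI exI[of _ 2] allI impI)
  fix n :: nat and tests dec
  assume n: "n \<ge> 2" and F: "nonadaptive_finds_defective n tests dec"
  have "card {j. j < length tests \<and> tests!j \<inter> {1..n} \<noteq> {}} + 1 \<ge> n"
    using key[OF F, of n] n by auto
  moreover have "card {j. j < length tests \<and> tests!j \<inter> {1..n} \<noteq> {}} \<le> length tests"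
    proof -
    have "{j. j < length tests \<and> tests!j \<inter> {1..n} \<noteq> {}} \<subseteq> {..<length tests}" by blast
    then show ?thesis using card_mono[of "{..<length tests}"] by force
  qed
  ultimately have "length tests + 1 \<ge> n" by linarith
  then show "real (length tests) \<ge> 1/2 * real n" using n by linarith
qed simp

end
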